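(* Let $p$ be a prime with $p \equiv \pm 3 \pmod 8$. Then $2p$ is not $\pi/4$-congruent.
   Context: A positive integer $n$ is called $\pi/4$-congruent if there exist positive rationals $a,b,c$ such that the triangle with sides $a$, $b\sqrt 2$, $c$ has angle $\pi/4$ opposite the side $c$ and area $n$; equivalently $ab = 2n$ and $c^2 = a^2 + 2b^2 - 2ab$. *)

theory Defs
  imports Complex_Main "HOL-Computational_Algebra.Primes"
begin

text \<open>A positive integer n is pi/4-congruent if there are positive rationals a, b, c
with a b = 2 n and c^2 = a^2 + 2 b^2 - 2 a b (triangle with sides a, b sqrt 2, c,
angle pi/4 opposite c, area n).\<close>
definition pi4_congruent :: "nat \<Rightarrow> bool" where
  "pi4_congruent n \<longleftrightarrow> (\<exists>a b c :: rat. a > 0 \<and> b > 0 \<and> c > 0 \<and>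
      a * b = 2 * of_nat n \<and> c ^ 2 = a ^ 2 + 2 * b ^ 2 - 2 * a * b)"

end

theory Submission
  imports Defs "HOL-Number_Theory.Number_Theory" "HOL-Computational_Algebra.Nth_Powers"
begin

lemma two_nonres:
  fixes p :: nat
  assumes p: "prime p" and m: "p mod 8 = 3 \<or> p mod 8 = 5"
  shows "\<not> QuadRes (int p) 2"
proof -
  have p2: "2 < p" using m p prime_ge_2_nat[OF p] by auto
  interpret G: GAUSS p 2
    by unfold_locales (use p p2 m in \<open>auto simp: cong_def\<close>)
  define h where "h = (int p - 1) div 2"
  have CE: "G.E = (\<lambda>x. 2 * x) ` {h div 2 <.. h}"
  proof -
    have "G.C = (\<lambda>x. x * 2) ` G.A"
      unfolding G.C_def G.B_def image_image G.A_def
      by (rule image_cong) (auto simp: h_def)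
    then show ?thesis unfolding G.E_def G.A_def h_def[symmetric]
      by (auto simp: image_iff)
  qed
  have "card G.E = card {h div 2 <.. h}"
    unfolding CE by (rule card_image) (auto simp: inj_on_def)
  also have "\<dots> = nat (h - h div 2)" by simp
  finally have cE: "card G.E = nat (h - h div 2)" .
  have e: "int p mod 8 = 3 \<or> int p mod 8 = 5" using m
    by (metis of_nat_mod of_nat_numeral)
  have hh: "h - h div 2 = 2 * (int p div 8) + 1" using e unfolding h_def by presburger
  have "odd (h - h div 2)" unfolding hh by simp
  moreover have "h - h div 2 \<ge> 0" unfolding hh by simp
  ultimately have "odd (nat (h - h div 2))" by (simp add: even_nat_iff)
  then have "Legendre 2 p = -1" using G.gauss_lemma cE by simp
  then show ?thesis unfolding Legendre_def by (auto split: if_splits)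
qed

lemma cong2_lemma:
  fixes p :: nat and x y :: int
  assumes p: "prime p" and m: "p mod 8 = 3 \<or> p mod 8 = 5"
    and d: "int p dvd (x^2 - 2*y^2)"
  shows "int p dvd y"
proof (rule ccontr)
  assume ny: "\<not> int p dvd y"
  have pi: "prime (int p)" using p by simp
  have "coprime y (int p)" using ny pi
    by (metis coprime_commute prime_imp_coprime)
  then obtain u where u: "[y * u = 1] (mod int p)" using cong_solve_coprime_int by blast
  have "[x^2 = 2*y^2] (mod int p)" using d by (simp add: cong_iff_dvd_diff)
  then have "[x^2 * u^2 = 2*y^2*u^2] (mod int p)" by (rule cong_mult) simp
  moreover have "[2*y^2*u^2 = 2*(y*u)^2] (mod int p)" by (simp add: power_mult_distrib ac_simps)
  moreover have "[2*(y*u)^2 = 2*1^2] (mod int p)" using u by (intro cong_mult cong_pow) auto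
  ultimately have "[(x*u)^2 = 2] (mod int p)"
    by (simp add: power_mult_distrib) (meson cong_trans)
  then have "QuadRes (int p) 2" unfolding QuadRes_def by blast
  with two_nonres[OF p m] show False by simp
qed

lemma minus_one_res:
  fixes p :: nat
  assumes p: "prime p" and m: "p mod 8 = 5"
  shows "\<exists>i. [i^2 = -1] (mod int p)"
proof -
  have p2: "2 < p" using m p prime_ge_2_nat[OF p] by auto
  have "[Legendre (-1) p = (-1) ^ ((p - 1) div 2)] (mod p)"
    using euler_criterion[OF p p2] by simp
  moreover have "even ((p - 1) div 2)" using m by presburger
  ultimately have c: "[Legendre (-1) p = 1] (mod p)" by simp
  have n2: "\<not> int p dvd 2" using p2
    by (metis of_nat_numeral zdvd_imp_le zero_less_numeral int_ops(3) le_less_trans less_le_not_le of_nat_le_iff one_add_one nat_le_linear)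
  have "Legendre (-1) p = 1"
  proof (rule ccontr)
    assume "Legendre (-1) p \<noteq> 1"
    then have "Legendre (-1) p = 0 \<or> Legendre (-1) p = -1" unfolding Legendre_def by (simp split: if_splits)
    then show False
    proof
      assume "Legendre (-1) (int p) = 0"
      have "int p dvd (Legendre (-1) (int p) - 1)" using c by (simp only: cong_iff_dvd_diff)
      then have "int p dvd 1" using \<open>Legendre (-1) (int p) = 0\<close> by simp
      then have "int p \<le> 1" by (rule zdvd_imp_le) simp
      then show False using p2 by simp
    next
      assume "Legendre (-1) (int p) = -1"
      have "int p dvd (Legendre (-1) (int p) - 1)" using c by (simp only: cong_iff_dvd_diff)
      then have "int p dvd 2" using \<open>Legendre (-1) (int p) = -1\<close> by simp
      with n2 show False by simp
    qed
  qed
  then show ?thesis unfolding Legendre_def QuadRes_def by (auto split: if_splits)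
qed

lemma condm2_lemma:
  fixes p :: nat and x y :: int
  assumes p: "prime p" and m: "p mod 8 = 5"
    and d: "int p dvd (x^2 + 2*y^2)"
  shows "int p dvd y"
proof -
  obtain i where i: "[i^2 = -1] (mod int p)" using minus_one_res[OF p m] by blast
  have i1: "int p dvd (i^2 + 1)" using i by (simp add: cong_iff_dvd_diff)
  have eq: "x^2 - 2*(i*y)^2 = (x^2 + 2*y^2) - 2*y^2*(i^2+1)"
    by (simp add: algebra_simps power_mult_distrib)
  have "int p dvd (x^2 - 2*(i*y)^2)" unfolding eq
    using d i1 by (intro dvd_diff dvd_mult) auto
  then have "int p dvd i * y" using cong2_lemma[OF p, of x "i*y"] m by blast
  moreover have "\<not> int p dvd i"
  proof
    assume "int p dvd i"
    then have "int p dvd i^2" by (simp add: power2_eq_square)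
    with i1 have "int p dvd 1" by (simp add: dvd_add_right_iff)
    then have "int p \<le> 1" by (rule zdvd_imp_le) simp
    then show False using p prime_ge_2_nat[OF p] by simp
  qed
  ultimately show ?thesis using p
    by (simp add: prime_dvd_mult_iff)
qed


lemma cop_primes:
  fixes a b :: int
  assumes "\<And>q. prime q \<Longrightarrow> q dvd a \<Longrightarrow> q dvd b \<Longrightarrow> False"
  shows "coprime a b"
proof (rule ccontr)
  assume nc: "\<not> coprime a b"
  show False
  proof (cases "gcd a b = 0")
    case True
    then have "a = 0" "b = 0" by auto
    then show False using assms[of 2] by simp
  next
    case False
    have "\<not> is_unit (gcd a b)" using nc by (simp add: coprime_iff_gcd_eq_1 is_unit_gcd)
    then obtain q where "q dvd gcd a b" "prime q" using prime_divisor_exists[OF False] by blast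
    then show False using assms[of q] by auto
  qed
qed

lemma pow4:
  fixes A B c :: int
  assumes "coprime A B" "A > 0" "B > 0" "A * B = c^4"
  shows "\<exists>a. A = a^4"
proof -
  have "\<bar>c\<bar>^4 = c^4" by (simp add: power_even_abs)
  then have "nat A * nat B = (nat \<bar>c\<bar>)^4"
    using assms by (metis nat_mult_distrib[symmetric] nat_power_eq abs_ge_zero less_imp_le)
  moreover have "coprime (nat A) (nat B)"
    using assms by (metis coprime_int_iff int_nat_eq less_imp_le)
  ultimately have "is_nth_power 4 (nat A)"
    using assms is_nth_power_mult_coprime_natD(1)[of "nat A" "nat B" 4]
    by (metis is_nth_power_nth_power zero_less_nat_eq)
  then obtain y where "nat A = y^4" unfolding is_nth_power_def by blast
  then have "A = (int y)^4" using assms by (metis int_nat_eq less_imp_le of_nat_power)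
  then show ?thesis by blast
qed

lemma split_one:
  fixes A B q N :: int
  assumes "prime q" "A * B = q * N"
  shows "(\<exists>A'. A = q * A' \<and> A' * B = N) \<or> (\<exists>B'. B = q * B' \<and> A * B' = N)"
proof -
  have q0: "q \<noteq> 0" using assms by auto
  have "q dvd A * B" using assms by simp
  then have "q dvd A \<or> q dvd B" using assms prime_dvd_mult_iff by blast
  then show ?thesis
  proof
    assume "q dvd A"
    then obtain A' where A': "A = q * A'" by blast
    then have "A' * B = N" using assms q0 by (simp add: mult.assoc)
    then show ?thesis using A' by blast
  next
    assume "q dvd B"
    then obtain B' where B': "B = q * B'" by blast
    then have "A * B' = N" using assms q0 by (simp add: ac_simps)
    then show ?thesis using B' by blast
  qed
qed

lemma split_sq:
  fixes A B q N :: int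
  assumes "prime q" "coprime A B" "A * B = q^2 * N"
  shows "(\<exists>A'. A = q^2 * A' \<and> A' * B = N) \<or> (\<exists>B'. B = q^2 * B' \<and> A * B' = N)"
proof -
  have q0: "q \<noteq> 0" using assms by auto
  have nu: "\<not> is_unit q" using assms by auto
  have "A * B = q * (q * N)" using assms by (simp add: power2_eq_square ac_simps)
  then have "(\<exists>A'. A = q * A' \<and> A' * B = q * N) \<or> (\<exists>B'. B = q * B' \<and> A * B' = q * N)"
    using split_one[OF assms(1)] by blast
  then show ?thesis
  proof
    assume "\<exists>A'. A = q * A' \<and> A' * B = q * N"
    then obtain A1 where A1: "A = q * A1" "A1 * B = q * N" by blast
    from split_one[OF assms(1) A1(2)] show ?thesis
    proof
      assume "\<exists>A'. A1 = q * A' \<and> A' * B = N"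
      then show ?thesis using A1 by (metis mult.assoc power2_eq_square)
    next
      assume "\<exists>B'. B = q * B' \<and> A1 * B' = N"
      then have "q dvd B" by auto
      moreover have "q dvd A" using A1 by simp
      ultimately show ?thesis using assms(2) nu by (meson not_coprimeI)
    qed
  next
    assume "\<exists>B'. B = q * B' \<and> A * B' = q * N"
    then obtain B1 where B1: "B = q * B1" "A * B1 = q * N" by blast
    from split_one[OF assms(1) B1(2)] show ?thesis
    proof
      assume "\<exists>B'. B1 = q * B' \<and> A * B' = N"
      then show ?thesis using B1 by (metis mult.assoc power2_eq_square)
    next
      assume "\<exists>A'. A = q * A' \<and> A' * B1 = N"
      then have "q dvd A" by auto
      moreover have "q dvd B" using B1 by simp
      ultimately show ?thesis using assms(2) nu by (meson not_coprimeI)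
    qed
  qed
qed

lemma odd_sq8:
  fixes x :: int
  assumes "odd x"
  shows "\<exists>k. x^2 = 8*k + 1"
proof -
  obtain m where m: "x = 2*m + 1" using assms by (metis oddE)
  have "x^2 = 4*(m*(m+1)) + 1" unfolding m by (simp add: algebra_simps power2_eq_square)
  moreover have "even (m*(m+1))" by simp
  then obtain j where "m*(m+1) = 2*j" by (rule evenE)
  ultimately have "x^2 = 8*j + 1" by simp
  then show ?thesis by blast
qed

lemma odd_pow4_16:
  fixes x :: int
  assumes "odd x"
  shows "\<exists>k. x^4 = 16*k + 1"
proof -
  obtain k where k: "x^2 = 8*k + 1" using odd_sq8[OF assms] by blast
  have "x^4 = (x^2)^2" by simp
  also have "\<dots> = 16*(4*k^2 + k) + 1" unfolding k by (simp add: algebra_simps power2_eq_square)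
  finally show ?thesis by blast
qed


lemma mod4_lem:
  fixes s y :: int
  assumes "odd s" "4 dvd (s^2 + y^2)"
  shows False
proof -
  obtain k1 where k1: "s^2 = 8*k1 + 1" using odd_sq8[OF assms(1)] by blast
  show False
  proof (cases "even y")
    case True
    then obtain m where "y = 2*m" by blast
    then have "y^2 = 4*m^2" by (simp add: power2_eq_square)
    then show False using assms(2) k1 by presburger
  next
    case False
    obtain k2 where "y^2 = 8*k2 + 1" using odd_sq8[OF False] by blast
    then show False using assms(2) k1 by presburger
  qed
qed

lemma mod8_B:
  fixes P b g d :: int
  assumes "odd b" "P mod 8 = 3 \<or> P mod 8 = 5"
    and e: "P*b^2 + 2*g^2*d^2 = 2*g^4 + d^4"
  shows False
proof -
  obtain k where k: "b^2 = 8*k + 1" using odd_sq8[OF assms(1)] by blast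
  have Po: "odd P" using assms(2) by presburger
  have "odd (P*b^2)" using Po assms(1) by simp
  then have "odd (2*g^4 + d^4 - 2*g^2*d^2)" using e by (metis add_diff_cancel_right')
  then have "odd d" by simp
  then obtain k2 where k2: "d^2 = 8*k2 + 1" using odd_sq8 by blast
  have g4: "4 dvd g^2 * (g^2 - 1)"
  proof (cases "even g")
    case True
    then obtain m where "g = 2*m" by blast
    then have "g^2 = 4*m^2" by (simp add: power2_eq_square)
    then show ?thesis by simp
  next
    case False
    obtain k3 where "g^2 = 8*k3 + 1" using odd_sq8[OF False] by blast
    then show ?thesis by simp
  qed
  then obtain u where u: "g^2 * (g^2 - 1) = 4*u" by blast
  have "P*(8*k+1) + 2*g^2*(8*k2+1) = 2*(g^2)^2 + (8*k2+1)^2"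
    using e k k2 by (metis power2_eq_square power4_eq_xxxx mult.assoc)
  then have "P - 1 = 8*(2*k2 + 8*k2^2 - P*k) + 2*(g^2*(g^2-1)) - 8*g^2*k2*2"
    by (simp add: algebra_simps power2_eq_square)
  then have "P - 1 = 8*(2*k2 + 8*k2^2 - P*k + u - 2*g^2*k2)" using u by (simp add: algebra_simps)
  then show False using assms(2) by presburger
qed

lemma mod16_lem:
  fixes P s a b :: int
  assumes "odd s" "odd a" "odd b" "P mod 8 = 3"
    and e: "2*s^2 - 2*P*a^2*b^2 = P^2*b^4 - a^4"
  shows False
proof -
  obtain k1 where k1: "s^2 = 8*k1 + 1" using odd_sq8[OF assms(1)] by blast
  have "odd (a*b)" using assms by simp
  then obtain k where k: "(a*b)^2 = 8*k + 1" using odd_sq8 by blast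
  obtain k4 where k4: "a^4 = 16*k4 + 1" using odd_pow4_16[OF assms(2)] by blast
  obtain k5 where k5: "b^4 = 16*k5 + 1" using odd_pow4_16[OF assms(3)] by blast
  have "2*s^2 - 2*P*(a*b)^2 = P^2*b^4 - a^4" using e by (simp add: power_mult_distrib mult.assoc)
  then have eq: "2*(8*k1 + 1) - 2*P*(8*k+1) = P^2*(16*k5+1) - (16*k4+1)"
    by (simp only: k1 k k4 k5)
  have idt: "16*(k1 - P*k - P^2*k5 + k4) - (P^2 + 2*P - 3) =
      (2*(8*k1 + 1) - 2*P*(8*k+1)) - (P^2*(16*k5+1) - (16*k4+1))"
    by (simp add: algebra_simps)
  have h: "16*(k1 - P*k - P^2*k5 + k4) = P^2 + 2*P - 3" using eq idt by simp
  obtain j where j: "P = 8*j + 3" using assms(4) by (metis mod_div_mult_eq add.commute mult.commute)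
  have "P^2 + 2*P - 3 = 16*(4*j^2 + 4*j) + 12" unfolding j by (simp add: algebra_simps power2_eq_square)
  with h show False by presburger
qed

lemma sq_from4:
  fixes x a b :: int
  assumes "x^4 = a^4 * b^4"
  shows "x^2 = a^2 * b^2"
proof -
  have x4: "(x^2)^2 = x^4" by (simp add: power4_eq_xxxx power2_eq_square mult.assoc)
  have "(a^2*b^2)^2 = a^4*b^4" by (simp add: power4_eq_xxxx power2_eq_square ac_simps)
  then have h: "(x^2)^2 = (a^2*b^2)^2" using assms x4 by simp
  show ?thesis by (rule power2_eq_imp_eq[OF h]) simp_all
qed


lemma cong2_int:
  fixes P x y :: int
  assumes P: "prime P" and m: "P mod 8 = 3 \<or> P mod 8 = 5" and d: "P dvd (x^2 - 2*y^2)"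
  shows "P dvd y"
proof -
  have P0: "P \<ge> 0" using P by (simp add: prime_ge_0_int)
  have e: "int (nat P) = P" using P0 by simp
  have np: "prime (nat P)" using P e prime_nat_int_transfer[of "nat P"] by simp
  have nm: "nat P mod 8 = nat (P mod 8)" using P0 by (simp add: nat_mod_distrib)
  have mm: "nat P mod 8 = 3 \<or> nat P mod 8 = 5" using m unfolding nm by auto
  have "int (nat P) dvd y" by (rule cong2_lemma[OF np mm]) (use d e in simp)
  then show ?thesis using e by simp
qed

lemma condm2_int:
  fixes P x y :: int
  assumes P: "prime P" and m: "P mod 8 = 5" and d: "P dvd (x^2 + 2*y^2)"
  shows "P dvd y"
proof -
  have P0: "P \<ge> 0" using P by (simp add: prime_ge_0_int)
  have e: "int (nat P) = P" using P0 by simp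
  have np: "prime (nat P)" using P e prime_nat_int_transfer[of "nat P"] by simp
  have nm: "nat P mod 8 = nat (P mod 8)" using P0 by (simp add: nat_mod_distrib)
  have mm: "nat P mod 8 = 5" using m unfolding nm by auto
  have "int (nat P) dvd y" by (rule condm2_lemma[OF np mm]) (use d e in simp)
  then show ?thesis using e by simp
qed

lemma halves:
  fixes W S :: int
  assumes "odd W" "odd S" "\<bar>S\<bar> < W" "coprime W S"
  shows "\<exists>C D. W = C + D \<and> S = D - C \<and> C > 0 \<and> D > 0 \<and> coprime C D \<and> 4*C*D = W^2 - S^2"
proof -
  have "even (W - S)" "even (W + S)" using assms by auto
  from \<open>even (W - S)\<close> obtain C where C: "W - S = 2*C" by (rule evenE)
  from \<open>even (W + S)\<close> obtain D where D: "W + S = 2*D" by (rule evenE)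
  have "W = C + D" "S = D - C" using C D by auto
  moreover have "C > 0" "D > 0" using C D assms(3) by auto
  moreover have "coprime C D"
  proof (rule cop_primes)
    fix q assume q: "prime q" "q dvd C" "q dvd D"
    then have "q dvd W" "q dvd S" using \<open>W = C + D\<close> \<open>S = D - C\<close> by auto
    then show False using assms(4) q(1) not_coprimeI[of q W S] not_prime_unit[of q] by blast
  qed
  moreover have "4*C*D = W^2 - S^2"
  proof -
    have "W^2 - S^2 = (W - S)*(W + S)" by (simp add: algebra_simps power2_eq_square)
    then show ?thesis using C D by simp
  qed
  ultimately show ?thesis by blast
qed

lemma sq_lt_abs:
  fixes x w :: int
  assumes "x^2 < w^2" "w \<ge> 0"
  shows "\<bar>x\<bar> < w"
  using power2_less_imp_less[of "\<bar>x\<bar>" w] assms by simp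

lemma core_P2:
  fixes P A B t :: int
  assumes P: "prime P" and cop: "coprime A B" and pos: "A > 0" "B > 0" and e: "A * B = P^2 * t^4"
  shows "\<exists>a b. t^4 = a^4 * b^4 \<and> ((A = P^2*a^4 \<and> B = b^4) \<or> (A = a^4 \<and> B = P^2*b^4))"
proof -
  have P0: "P > 0" using P prime_gt_0_int by blast
  from split_sq[OF P cop e] show ?thesis
  proof
    assume "\<exists>A'. A = P^2 * A' \<and> A' * B = t^4"
    then obtain A' where A': "A = P^2 * A'" "A' * B = t^4" by blast
    have A'p: "A' > 0" using A'(1) pos P0 by (simp add: zero_less_mult_iff)
    have c: "coprime A' B" using cop A'(1) by simp
    obtain a where a: "A' = a^4" using pow4[OF c A'p pos(2) A'(2)] by blast
    obtain b where b: "B = b^4" using pow4[of B A' t] c A'p pos(2) A'(2) by (auto simp: coprime_commute mult.commute)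
    show ?thesis using A' a b by (intro exI[of _ a] exI[of _ b]) auto
  next
    assume "\<exists>B'. B = P^2 * B' \<and> A * B' = t^4"
    then obtain B' where B': "B = P^2 * B'" "A * B' = t^4" by blast
    have B'p: "B' > 0" using B'(1) pos P0 by (simp add: zero_less_mult_iff)
    have c: "coprime A B'" using cop B'(1) by simp
    obtain a where a: "A = a^4" using pow4[OF c pos(1) B'p B'(2)] by blast
    obtain b where b: "B' = b^4" using pow4[of B' A t] c B'p pos(1) B'(2) by (auto simp: coprime_commute mult.commute)
    show ?thesis using B' a b by (intro exI[of _ a] exI[of _ b]) auto
  qed
qed

lemma prime2_int: "prime (2::int)" by simp

lemma split_2a4:
  fixes C D a :: int
  assumes cop: "coprime C D" and pos: "C > 0" "D > 0" and e: "C * D = 2 * a^4"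
  shows "\<exists>g d. a^4 = g^4 * d^4 \<and> C + D = 2*g^4 + d^4"
proof -
  from split_one[OF prime2_int e] show ?thesis
  proof
    assume "\<exists>A'. C = 2 * A' \<and> A' * D = a^4"
    then obtain C1 where C1: "C = 2 * C1" "C1 * D = a^4" by blast
    have p1: "C1 > 0" using C1 pos by simp
    have c: "coprime C1 D" using cop C1 by simp
    obtain g where g: "C1 = g^4" using pow4[OF c p1 pos(2) C1(2)] by blast
    obtain d where d: "D = d^4" using pow4[of D C1 a] c p1 pos(2) C1(2) by (auto simp: coprime_commute mult.commute)
    show ?thesis using C1 g d by (intro exI[of _ g] exI[of _ d]) auto
  next
    assume "\<exists>B'. D = 2 * B' \<and> C * B' = a^4"
    then obtain D1 where D1: "D = 2 * D1" "C * D1 = a^4" by blast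
    have p1: "D1 > 0" using D1 pos by simp
    have c: "coprime C D1" using cop D1 by simp
    obtain d where d: "C = d^4" using pow4[OF c pos(1) p1 D1(2)] by blast
    obtain g where g: "D1 = g^4" using pow4[of D1 C a] c p1 pos(1) D1(2) by (auto simp: coprime_commute mult.commute)
    show ?thesis using D1 g d by (intro exI[of _ g] exI[of _ d]) (auto simp: ac_simps)
  qed
qed

lemma split_2P2:
  fixes P C D a :: int
  assumes P: "prime P" and cop: "coprime C D" and pos: "C > 0" "D > 0" and e: "C * D = 2 * (P^2 * a^4)"
  shows "\<exists>g d. a^4 = g^4 * d^4 \<and>
     ((C + D = 2*P^2*g^4 + d^4 \<and> coprime (2*P^2*g^4) (d^4)) \<or>
      (C + D = 2*g^4 + P^2*d^4 \<and> coprime (2*g^4) (P^2*d^4)))"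
proof -
  from split_one[OF prime2_int e] show ?thesis
  proof
    assume "\<exists>A'. C = 2 * A' \<and> A' * D = P^2 * a^4"
    then obtain C1 where C1: "C = 2 * C1" "C1 * D = P^2 * a^4" by blast
    have p1: "C1 > 0" using C1 pos by simp
    have c: "coprime C1 D" using cop C1 by simp
    obtain g d where gd: "a^4 = g^4 * d^4" "(C1 = P^2*g^4 \<and> D = d^4) \<or> (C1 = g^4 \<and> D = P^2*d^4)"
      using core_P2[OF P c p1 pos(2) C1(2)] by blast
    show ?thesis using C1 gd cop by (intro exI[of _ g] exI[of _ d]) (auto simp: ac_simps)
  next
    assume "\<exists>B'. D = 2 * B' \<and> C * B' = P^2 * a^4"
    then obtain D1 where D1: "D = 2 * D1" "D1 * C = P^2 * a^4" by (auto simp: ac_simps)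
    have p1: "D1 > 0" using D1 pos by simp
    have c: "coprime D1 C" using cop D1 by (simp add: coprime_commute)
    obtain g d where gd: "a^4 = g^4 * d^4" "(D1 = P^2*g^4 \<and> C = d^4) \<or> (D1 = g^4 \<and> C = P^2*d^4)"
      using core_P2[OF P c p1 pos(1) D1(2)] by blast
    show ?thesis using D1 gd cop by (intro exI[of _ g] exI[of _ d]) (auto simp: ac_simps coprime_commute)
  qed
qed

lemma split_4P2:
  fixes P A B t :: int
  assumes P: "prime P" and cop: "coprime A B" and pos: "A > 0" "B > 0" and e: "A * B = 2^2 * (P^2 * t^4)"
  shows "\<exists>a b. t^4 = a^4 * b^4 \<and>
     ((A = 4*P^2*a^4 \<and> B = b^4) \<or> (A = 4*a^4 \<and> B = P^2*b^4) \<or>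
      (B = 4*P^2*a^4 \<and> A = b^4) \<or> (B = 4*a^4 \<and> A = P^2*b^4))"
proof -
  from split_sq[OF prime2_int cop e] show ?thesis
  proof
    assume "\<exists>A'. A = 2^2 * A' \<and> A' * B = P^2 * t^4"
    then obtain C1 where C1: "A = 4 * C1" "C1 * B = P^2 * t^4" by auto
    have p1: "C1 > 0" using C1 pos by simp
    have c: "coprime C1 B" using cop C1 by simp
    obtain g d where gd: "t^4 = g^4 * d^4" "(C1 = P^2*g^4 \<and> B = d^4) \<or> (C1 = g^4 \<and> B = P^2*d^4)"
      using core_P2[OF P c p1 pos(2) C1(2)] by blast
    show ?thesis using C1 gd by (intro exI[of _ g] exI[of _ d]) (auto simp: ac_simps)
  next
    assume "\<exists>B'. B = 2^2 * B' \<and> A * B' = P^2 * t^4"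
    then obtain D1 where D1: "B = 4 * D1" "D1 * A = P^2 * t^4" by (auto simp: ac_simps)
    have p1: "D1 > 0" using D1 pos by simp
    have c: "coprime D1 A" using cop D1 by (simp add: coprime_commute)
    obtain g d where gd: "t^4 = g^4 * d^4" "(D1 = P^2*g^4 \<and> A = d^4) \<or> (D1 = g^4 \<and> A = P^2*d^4)"
      using core_P2[OF P c p1 pos(1) D1(2)] by blast
    show ?thesis using D1 gd by (intro exI[of _ g] exI[of _ d]) (auto simp: ac_simps)
  qed
qed

lemma not_cop_prime:
  fixes q x y :: int
  assumes "prime q" "q dvd x" "q dvd y" "coprime x y"
  shows False
  using assms not_coprimeI[of q x y] not_prime_unit[of q] by blast

lemma dvd_powI:
  fixes x y :: int
  assumes "x dvd y" "n > 0"
  shows "x dvd y^n"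
  using dvd_trans[OF assms(1) dvd_power[of n y]] assms(2) by simp

lemma caseA:
  fixes P s a b R :: int
  assumes P: "prime P" and m: "P mod 8 = 3 \<or> P mod 8 = 5"
   and IH: "\<And>s' r' z'. \<bar>r'\<bar> < R \<Longrightarrow> r' \<noteq> 0 \<Longrightarrow> odd s' \<Longrightarrow> coprime s' r' \<Longrightarrow> \<not> P dvd s' \<Longrightarrow>
            z'^2 = s'^4 - 2*P*r'^2*s'^2 + 2*P^2*r'^4 \<Longrightarrow> False"
   and e: "s^2 = b^4 - 4*P^2*a^4 + 4*P*a^2*b^2"
   and so: "odd s" and bo: "odd b" and Pb: "\<not> P dvd b" and ab: "coprime a b" and a0: "a \<noteq> 0"
   and aR: "\<bar>a\<bar> < R"
  shows False
proof -
  define W where "W = b^2 + 2*P*a^2"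
  have P2: "P \<ge> 2" using P by (simp add: prime_ge_2_int)
  have eW: "s^2 + 8*P^2*a^4 = W^2" unfolding W_def e by (Groebner_Basis.algebra)
  have Wo: "odd W" using bo unfolding W_def by simp
  have b0: "b \<noteq> 0" using bo by auto
  have bb: "b^2 > 0" using b0 by simp
  have pa: "P*a^2 > 0" using a0 P2 by simp
  have "2*P*a^2 = 2*(P*a^2)" by simp
  then have Wp: "W > 0" unfolding W_def using bb pa by linarith
  have "8*P^2*a^4 > 0" using a0 P2 by simp
  then have "s^2 < W^2" using eW by linarith
  then have sW: "\<bar>s\<bar> < W" using Wp by (intro sq_lt_abs) auto
  have cop: "coprime W s"
  proof (rule cop_primes)
    fix q assume q: "prime q" "q dvd W" "q dvd s"
    have q2: "\<not> q dvd 2"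
    proof
      assume "q dvd 2"
      then have "q = 2" using q(1) by (simp add: primes_dvd_imp_eq)
      then show False using q(3) so by simp
    qed
    have "q dvd W^2" "q dvd s^2" using q by (simp_all add: power2_eq_square)
    then have "q dvd W^2 - s^2" by (rule dvd_diff)
    moreover have "W^2 - s^2 = 8*P^2*a^4" using eW by linarith
    moreover have "(8::int)*P^2*a^4 = 2^3 * (P^2 * a^4)" by simp
    ultimately have "q dvd 2^3 * (P^2 * a^4)" by simp
    then have "q dvd 2^3 \<or> q dvd P^2 \<or> q dvd a^4" using prime_dvd_multD[OF q(1)] by blast
    then have "q dvd 2 \<or> q dvd P \<or> q dvd a" using prime_dvd_power[OF q(1)] by blast
    then show False
    proof (elim disjE)
      assume "q dvd 2" then show False using q2 by simp
    next
      assume "q dvd P"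
      then have "q = P" using q(1) P by (simp add: primes_dvd_imp_eq)
      then have "P dvd b^2" using q(2) unfolding W_def
        by (metis dvd_add_left_iff dvd_mult dvd_mult2 dvd_refl)
      then show False using Pb P by (simp add: prime_dvd_power_iff)
    next
      assume qa: "q dvd a"
      then have "q dvd a^2" by (rule dvd_powI) simp
      then have "q dvd 2*P*a^2" by (rule dvd_mult)
      then have "q dvd b^2" using q(2) unfolding W_def by (simp add: dvd_add_left_iff)
      then have "q dvd b" using q(1) by (simp add: prime_dvd_power_iff)
      then show False using qa q(1) ab not_cop_prime by blast
    qed
  qed
  obtain C D where CD: "W = C + D" "s = D - C" "C > 0" "D > 0" "coprime C D" "4*C*D = W^2 - s^2"
    using halves[OF Wo so sW cop] by blast
  have ws: "W^2 - s^2 = 8*P^2*a^4" using eW by linarith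
  have "4*(C*D) = 4*(2*(P^2*a^4))" using CD(6) ws by (simp add: mult.assoc)
  then have "C * D = 2 * (P^2 * a^4)" by simp
  from split_2P2[OF P CD(5) CD(3) CD(4) this] obtain g d where
    gd: "a^4 = g^4 * d^4" and
    cs: "(C + D = 2*P^2*g^4 + d^4 \<and> coprime (2*P^2*g^4) (d^4)) \<or>
         (C + D = 2*g^4 + P^2*d^4 \<and> coprime (2*g^4) (P^2*d^4))" by blast
  have a2: "a^2 = g^2 * d^2" using sq_from4[OF gd] .
  from cs show False
  proof (elim disjE conjE)
    assume w1: "C + D = 2*P^2*g^4 + d^4" and c1: "coprime (2*P^2*g^4) (d^4)"
    have "b^2 + 2*P*(g^2*d^2) = 2*P^2*g^4 + d^4" using w1 CD(1) a2 unfolding W_def by simp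
    then have eq: "b^2 = d^4 - 2*P*g^2*d^2 + 2*P^2*g^4" by (Groebner_Basis.algebra)
    have d0: "d \<noteq> 0" using gd a0 by auto
    have g0: "g \<noteq> 0" using gd a0 by auto
    have "d^2 > 0" using d0 by simp
    then have "d^2 \<ge> 1" by linarith
    then have "g^2 * 1 \<le> g^2 * d^2" by (intro mult_left_mono) simp_all
    then have "\<bar>g\<bar> \<le> \<bar>a\<bar>" using a2 by (simp add: abs_le_square_iff)
    then have gR: "\<bar>g\<bar> < R" using aR by simp
    have dodd: "odd d"
    proof
      assume "even d"
      then have "2 dvd d^4" by simp
      moreover have "2 dvd 2*P^2*g^4" by simp
      ultimately show False using c1 not_cop_prime[OF prime2_int] by blast
    qed
    have cdg: "coprime d g" using c1 g0 by (simp add: coprime_commute)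
    have Pd: "\<not> P dvd d"
    proof
      assume "P dvd d"
      then have "P dvd d^4" by (rule dvd_powI) simp
      moreover have "P dvd 2*P^2*g^4" by (simp add: power2_eq_square)
      ultimately show False using c1 not_cop_prime[OF P] by blast
    qed
    show False using IH[OF gR g0 dodd cdg Pd eq] .
  next
    assume w2: "C + D = 2*g^4 + P^2*d^4" and c2: "coprime (2*g^4) (P^2*d^4)"
    have "b^2 + 2*P*a^2 = 2*g^4 + P^2*d^4" using w2 CD(1) unfolding W_def by simp
    then have "b^2 - 2*(g^2)^2 = P*(P*d^4 - 2*a^2)" by (Groebner_Basis.algebra)
    then have "P dvd b^2 - 2*(g^2)^2" by simp
    then have "P dvd g^2" using cong2_int[OF P m] by blast
    then have "P dvd g" using P by (simp add: prime_dvd_power_iff)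
    then have "P dvd g^4" by (rule dvd_powI) simp
    then have "P dvd 2*g^4" "P dvd P^2*d^4" by (auto simp: power2_eq_square)
    then show False using c2 not_cop_prime[OF P] by blast
  qed
qed

lemma caseB:
  fixes P s a b :: int
  assumes P: "prime P" and m: "P mod 8 = 3 \<or> P mod 8 = 5"
   and e: "s^2 = P^2*b^4 - 4*a^4 + 4*P*a^2*b^2"
   and so: "odd s" and bo: "odd b" and Pa: "\<not> P dvd a" and ab: "coprime a b" and a0: "a \<noteq> 0"
  shows False
proof -
  define W where "W = P*b^2 + 2*a^2"
  have P2: "P \<ge> 2" using P by (simp add: prime_ge_2_int)
  have Po: "odd P" using m by presburger
  have eW: "s^2 + 8*a^4 = W^2" unfolding W_def e by (Groebner_Basis.algebra)
  have Wo: "odd W" using bo Po unfolding W_def by simp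
  have b0: "b \<noteq> 0" using bo by auto
  have bb: "P*b^2 > 0" using b0 P2 by simp
  have pa: "a^2 > 0" using a0 by simp
  have Wp: "W > 0" unfolding W_def using bb pa by linarith
  have "8*a^4 > 0" using a0 by simp
  then have "s^2 < W^2" using eW by linarith
  then have sW: "\<bar>s\<bar> < W" using Wp by (intro sq_lt_abs) auto
  have ws: "W^2 - s^2 = 8*a^4" using eW by linarith
  have cop: "coprime W s"
  proof (rule cop_primes)
    fix q assume q: "prime q" "q dvd W" "q dvd s"
    have q2: "\<not> q dvd 2"
    proof
      assume "q dvd 2"
      then have "q = 2" using q(1) by (simp add: primes_dvd_imp_eq)
      then show False using q(3) so by simp
    qed
    have "q dvd W^2" "q dvd s^2" using q by (simp_all add: power2_eq_square)
    then have "q dvd W^2 - s^2" by (rule dvd_diff)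
    then have "q dvd 8 * a^4" using ws by simp
    then have "q dvd 8 \<or> q dvd a^4" using prime_dvd_multD[OF q(1)] by blast
    moreover have e8: "(2::int)^3 = 8" by simp
    ultimately have "q dvd 2^3 \<or> q dvd a^4" by (simp only: e8)
    then have "q dvd a" using prime_dvd_power[OF q(1)] q2 by blast
    then have "q dvd a^2" by (rule dvd_powI) simp
    then have "q dvd 2*a^2" by (rule dvd_mult)
    then have "q dvd P*b^2" using q(2) unfolding W_def by (simp add: dvd_add_left_iff)
    then have "q dvd P \<or> q dvd b^2" using prime_dvd_multD[OF q(1)] by blast
    then have "q dvd P \<or> q dvd b" using prime_dvd_power[OF q(1)] by blast
    then show False
    proof
      assume "q dvd P"
      then have "q = P" using q(1) P by (simp add: primes_dvd_imp_eq)
      then show False using \<open>q dvd a\<close> Pa by simp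
    next
      assume "q dvd b"
      then show False using \<open>q dvd a\<close> q(1) ab not_cop_prime by blast
    qed
  qed
  obtain C D where CD: "W = C + D" "s = D - C" "C > 0" "D > 0" "coprime C D" "4*C*D = W^2 - s^2"
    using halves[OF Wo so sW cop] by blast
  have "4*(C*D) = 4*(2*a^4)" using CD(6) ws by (simp add: mult.assoc)
  then have "C * D = 2 * a^4" by simp
  from split_2a4[OF CD(5) CD(3) CD(4) this] obtain g d where
    gd: "a^4 = g^4 * d^4" and w: "C + D = 2*g^4 + d^4" by blast
  have a2: "a^2 = g^2 * d^2" using sq_from4[OF gd] .
  have "P*b^2 + 2*(g^2*d^2) = 2*g^4 + d^4" using w CD(1) a2 unfolding W_def by simp
  then have "P*b^2 + 2*g^2*d^2 = 2*g^4 + d^4" by (simp add: mult.assoc)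
  then show False using mod8_B[OF bo m] by blast
qed

lemma case_rodd:
  fixes P s r w X :: int
  assumes P: "prime P" and m: "P mod 8 = 3 \<or> P mod 8 = 5"
    and ew: "w^2 = X^2 + P^2*r^4" and Xd: "X = s^2 - P*r^2" and wX: "\<bar>X\<bar> < w"
    and cwX: "coprime w X" and so: "odd s" and Ps: "\<not> P dvd s" and ro: "odd r"
  shows False
proof -
  have Po: "odd P" using m by presburger
  have Xe: "even X" using Xd so ro Po by simp
  have "odd (w^2)" using ew Xe Po ro by simp
  then have wo: "odd w" by simp
  define A where "A = w - X"
  define B where "B = w + X"
  have Ap: "A > 0" and Bp: "B > 0" using wX unfolding A_def B_def by auto
  have AB: "A * B = P^2 * r^4" unfolding A_def B_def using ew by Groebner_Basis.algebra
  have oddPr: "odd (P^2 * r^4)" using Po ro by simp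
  have cAB: "coprime A B"
  proof (rule cop_primes)
    fix q assume q: "prime q" "q dvd A" "q dvd B"
    have q2: "\<not> q dvd 2"
    proof
      assume "q dvd 2"
      then have "q = 2" using q(1) by (simp add: primes_dvd_imp_eq)
      moreover have "q dvd A * B" using q(2) by simp
      ultimately show False using AB oddPr by simp
    qed
    have "q dvd A + B" "q dvd B - A" using q by auto
    moreover have "A + B = 2 * w" "B - A = 2 * X" unfolding A_def B_def by auto
    ultimately have "q dvd 2 * w" "q dvd 2 * X" by auto
    then have "q dvd w" "q dvd X" using q2 prime_dvd_multD[OF q(1)] by blast+
    then show False using q(1) cwX not_cop_prime by blast
  qed
  obtain a b where ab4: "r^4 = a^4 * b^4" and
    cs: "(A = P^2*a^4 \<and> B = b^4) \<or> (A = a^4 \<and> B = P^2*b^4)"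
    using core_P2[OF P cAB Ap Bp AB] by blast
  have r2: "r^2 = a^2 * b^2" using sq_from4[OF ab4] .
  have h: "2*(s^2 - P*(a^2*b^2)) = B - A" using Xd r2 unfolding A_def B_def by simp
  from cs show False
  proof (elim disjE conjE)
    assume A1: "A = P^2*a^4" and B1: "B = b^4"
    have "2*(s^2 - P*(a^2*b^2)) = b^4 - P^2*a^4" using h A1 B1 by simp
    then have "(b^2)^2 - 2*s^2 = P*(P*a^4 - 2*a^2*b^2)" by Groebner_Basis.algebra
    then have "P dvd (b^2)^2 - 2*s^2" by simp
    then have "P dvd s" using cong2_int[OF P m] by blast
    then show False using Ps by simp
  next
    assume A1: "A = a^4" and B1: "B = P^2*b^4"
    have hh: "2*(s^2 - P*(a^2*b^2)) = P^2*b^4 - a^4" using h A1 B1 by simp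
    from m show False
    proof
      assume m5: "P mod 8 = 5"
      have "(a^2)^2 + 2*s^2 = P*(P*b^4 + 2*a^2*b^2)" using hh by Groebner_Basis.algebra
      then have "P dvd (a^2)^2 + 2*s^2" by simp
      then have "P dvd s" using condm2_int[OF P m5] by blast
      then show False using Ps by simp
    next
      assume m3: "P mod 8 = 3"
      have "odd (r^2)" using ro by simp
      then have "odd (a^2*b^2)" using r2 by simp
      then have ao: "odd a" and bo: "odd b" by auto
      have "2*s^2 - 2*P*a^2*b^2 = P^2*b^4 - a^4" using hh by Groebner_Basis.algebra
      then show False using mod16_lem[OF so ao bo m3] by blast
    qed
  qed
qed

lemma case_reven:
  fixes P s r w X :: int
  assumes P: "prime P" and m: "P mod 8 = 3 \<or> P mod 8 = 5"
    and IH: "\<And>s' r' z'. \<bar>r'\<bar> < \<bar>r\<bar> \<Longrightarrow> r' \<noteq> 0 \<Longrightarrow> odd s' \<Longrightarrow> coprime s' r' \<Longrightarrow> \<not> P dvd s' \<Longrightarrow>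
            z'^2 = s'^4 - 2*P*r'^2*s'^2 + 2*P^2*r'^4 \<Longrightarrow> False"
    and ew: "w^2 = X^2 + P^2*r^4" and Xd: "X = s^2 - P*r^2" and wX: "\<bar>X\<bar> < w"
    and cwX: "coprime w X" and so: "odd s" and Ps: "\<not> P dvd s" and re: "even r" and r0: "r \<noteq> 0"
  shows False
proof -
  obtain t where rt: "r = 2*t" using re by (rule evenE)
  have t0: "t \<noteq> 0" using r0 rt by simp
  have Xo: "odd X" using Xd so re by simp
  have "odd (w^2)" using ew Xo re by simp
  then have wo: "odd w" by simp
  obtain C D where CD: "w = C + D" "X = D - C" "C > 0" "D > 0" "coprime C D" "4*C*D = w^2 - X^2"
    using halves[OF wo Xo wX cwX] by blast
  have "4*(C*D) = 4*(2^2*(P^2*t^4))" using CD(6) ew rt by Groebner_Basis.algebra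
  then have CDe: "C*D = 2^2*(P^2*t^4)" by simp
  obtain a b where ab4: "t^4 = a^4 * b^4" and
    cs: "(C = 4*P^2*a^4 \<and> D = b^4) \<or> (C = 4*a^4 \<and> D = P^2*b^4) \<or>
         (D = 4*P^2*a^4 \<and> C = b^4) \<or> (D = 4*a^4 \<and> C = P^2*b^4)"
    using split_4P2[OF P CD(5) CD(3) CD(4) CDe] by blast
  have t2: "t^2 = a^2 * b^2" using sq_from4[OF ab4] .
  have sX: "s^2 = D - C + 4*P*(a^2*b^2)" using Xd CD(2) rt t2 by Groebner_Basis.algebra
  have "t^4 \<noteq> 0" using t0 by simp
  then have a0: "a \<noteq> 0" and b0: "b \<noteq> 0" using ab4 by auto
  have "b^2 > 0" using b0 by simp
  then have "b^2 \<ge> 1" by linarith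
  then have "a^2 * 1 \<le> a^2 * b^2" by (intro mult_left_mono) simp_all
  moreover have "t^2 > 0" using t0 by simp
  moreover have "r^2 = 4 * t^2" using rt by (simp add: power_mult_distrib)
  ultimately have "a^2 < r^2" using t2 by linarith
  then have aR: "\<bar>a\<bar> < \<bar>r\<bar>" using abs_le_square_iff[of r a] by linarith
  have P2: "P \<ge> 2" using P by (simp add: prime_ge_2_int)
  from cs show False
  proof (elim disjE conjE)
    assume C1: "C = 4*P^2*a^4" and D1: "D = b^4"
    have e: "s^2 = b^4 - 4*P^2*a^4 + 4*P*a^2*b^2" using sX C1 D1 by Groebner_Basis.algebra
    have bo: "odd b"
    proof
      assume "even b"
      then have "2 dvd D" using D1 by simp
      moreover have "2 dvd C" using C1 by (simp add: dvd_mult2)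
      ultimately show False using CD(5) not_cop_prime[OF prime2_int] by blast
    qed
    have Pb: "\<not> P dvd b"
    proof
      assume "P dvd b"
      then have "P dvd D" using D1 by (simp add: dvd_powI)
      moreover have "P dvd C" using C1 by (simp add: power2_eq_square)
      ultimately show False using CD(5) not_cop_prime[OF P] by blast
    qed
    have "coprime (4*P^2*a^4) (b^4)" using CD(5) C1 D1 by simp
    then have ab: "coprime a b" by simp
    show False using caseA[OF P m IH e so bo Pb ab a0 aR] .
  next
    assume C1: "C = 4*a^4" and D1: "D = P^2*b^4"
    have e: "s^2 = P^2*b^4 - 4*a^4 + 4*P*a^2*b^2" using sX C1 D1 by Groebner_Basis.algebra
    have bo: "odd b"
    proof
      assume "even b"
      then have "2 dvd D" using D1 by simp
      moreover have "2 dvd C" using C1 by simp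
      ultimately show False using CD(5) not_cop_prime[OF prime2_int] by blast
    qed
    have Pa: "\<not> P dvd a"
    proof
      assume "P dvd a"
      then have "P dvd C" using C1 by (simp add: dvd_powI)
      moreover have "P dvd D" using D1 by (simp add: power2_eq_square)
      ultimately show False using CD(5) not_cop_prime[OF P] by blast
    qed
    have "coprime (4*a^4) (P^2*b^4)" using CD(5) C1 D1 by simp
    then have ab: "coprime a b" by simp
    show False using caseB[OF P m e so bo Pa ab a0] .
  next
    assume D1: "D = 4*P^2*a^4" and C1: "C = b^4"
    have "s^2 + (b^2)^2 = 4*(P^2*a^4 + P*a^2*b^2)" using sX C1 D1 by Groebner_Basis.algebra
    then have "4 dvd s^2 + (b^2)^2" by simp
    then show False using mod4_lem[OF so] by blast
  next
    assume D1: "D = 4*a^4" and C1: "C = P^2*b^4"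
    have "s^2 + (P*b^2)^2 = 4*(a^4 + P*a^2*b^2)" using sX C1 D1 by Groebner_Basis.algebra
    then have "4 dvd s^2 + (P*b^2)^2" by simp
    then show False using mod4_lem[OF so] by blast
  qed
qed

lemma descent:
  fixes P :: int
  assumes P: "prime P" and m: "P mod 8 = 3 \<or> P mod 8 = 5"
  shows "nat \<bar>r\<bar> = n \<Longrightarrow> r \<noteq> 0 \<Longrightarrow> odd s \<Longrightarrow> coprime s r \<Longrightarrow> \<not> P dvd s \<Longrightarrow>
     z^2 = s^4 - 2*P*r^2*s^2 + 2*P^2*r^4 \<Longrightarrow> False"
proof (induction n arbitrary: s r z rule: less_induct)
  case (less n s r z)
  have IH: "False" if "\<bar>r'\<bar> < \<bar>r\<bar>" "r' \<noteq> 0" "odd s'" "coprime s' r'" "\<not> P dvd s'"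
      "z'^2 = s'^4 - 2*P*r'^2*s'^2 + 2*P^2*r'^4" for s' r' z'
  proof -
    have "nat \<bar>r'\<bar> < n" using that(1) less.prems(1) by linarith
    then show False using less.IH[OF _ refl that(2-6)] by blast
  qed
  define X where "X = s^2 - P*r^2"
  define w where "w = \<bar>z\<bar>"
  have "w^2 = z^2" unfolding w_def by simp
  then have ew: "w^2 = X^2 + P^2*r^4" using less.prems(6) unfolding X_def by Groebner_Basis.algebra
  have w0: "w \<ge> 0" unfolding w_def by simp
  have P2: "P \<ge> 2" using P by (simp add: prime_ge_2_int)
  have "P^2*r^4 > 0" using less.prems(2) P2 by simp
  then have "X^2 < w^2" using ew by linarith
  then have wX: "\<bar>X\<bar> < w" using w0 by (rule sq_lt_abs)
  have cwX: "coprime w X"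
  proof (rule cop_primes)
    fix q assume q: "prime q" "q dvd w" "q dvd X"
    have "q dvd w^2" "q dvd X^2" using q by (simp_all add: power2_eq_square)
    then have "q dvd w^2 - X^2" by (rule dvd_diff)
    then have "q dvd P^2 * r^4" using ew by simp
    then have "q dvd P^2 \<or> q dvd r^4" using prime_dvd_multD[OF q(1)] by blast
    then have "q dvd P \<or> q dvd r" using prime_dvd_power[OF q(1)] by blast
    then show False
    proof
      assume "q dvd P"
      then have qP: "q = P" using q(1) P by (simp add: primes_dvd_imp_eq)
      have "P dvd P*r^2" by simp
      then have "P dvd X + P*r^2" using q(3) qP by (simp add: dvd_add)
      then have "P dvd s^2" unfolding X_def by simp
      then have "P dvd s" using P by (simp add: prime_dvd_power_iff)
      then show False using less.prems(5) by simp
    next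
      assume qr: "q dvd r"
      then have "q dvd r^2" by (rule dvd_powI) simp
      then have "q dvd P*r^2" by (rule dvd_mult)
      then have "q dvd X + P*r^2" using q(3) by (simp add: dvd_add)
      then have "q dvd s^2" unfolding X_def by simp
      then have "q dvd s" using q(1) by (simp add: prime_dvd_power_iff)
      then show False using qr q(1) less.prems(4) not_cop_prime by blast
    qed
  qed
  have Xd: "X = s^2 - P*r^2" by (simp add: X_def)
  show False
  proof (cases "even r")
    case True
    show False using case_reven[OF P m IH ew Xd wX cwX less.prems(3) less.prems(5) True less.prems(2)] .
  next
    case False
    show False using case_rodd[OF P m ew Xd wX cwX less.prems(3) less.prems(5) False] .
  qed
qed

lemma int_free:
  fixes P R S M :: int
  assumes P: "prime P" and m: "P mod 8 = 3 \<or> P mod 8 = 5"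
    and Rp: "R > 0" and Sp: "S > 0" and cRS: "coprime R S"
    and e: "M^2 = 16*P^2*S^4 - 8*P*R^2*S^2 + 2*R^4"
  shows False
proof (cases "even R")
  case False
  have "M^2 = 2*(R^4 + 4*(2*P^2*S^4 - P*R^2*S^2))" using e by Groebner_Basis.algebra
  then have "even (M^2)" by simp
  then have "even M" by simp
  then obtain M' where M': "M = 2*M'" by (rule evenE)
  have "R^4 = 2*(M'^2 - 2*(2*P^2*S^4 - P*R^2*S^2))" using e M' by Groebner_Basis.algebra
  then have "even (R^4)" by simp
  then show False using False by simp
next
  case True
  then obtain R1 where R1: "R = 2*R1" by (rule evenE)
  have So: "odd S"
  proof
    assume "even S"
    then show False using True cRS not_cop_prime[OF prime2_int] by blast
  qed
  have "M^2 = 2*(8*(P^2*S^4 - 2*P*R1^2*S^2 + 2*R1^4))" using e R1 by Groebner_Basis.algebra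
  then have "even (M^2)" by simp
  then have "even M" by simp
  then obtain M2 where M2: "M = 2*M2" by (rule evenE)
  have "M2^2 = 2*(2*(P^2*S^4 - 2*P*R1^2*S^2 + 2*R1^4))" using e R1 M2 by Groebner_Basis.algebra
  then have "even (M2^2)" by simp
  then have "even M2" by simp
  then obtain M1 where M1: "M2 = 2*M1" by (rule evenE)
  have "16*M1^2 = 16*(P^2*S^4 - 2*P*R1^2*S^2 + 2*R1^4)" using e R1 M2 M1 by Groebner_Basis.algebra
  then have eM1: "M1^2 = P^2*S^4 - 2*P*R1^2*S^2 + 2*R1^4" by simp
  have "M1^2 - 2*(R1^2)^2 = P*(P*S^4 - 2*R1^2*S^2)" using eM1 by Groebner_Basis.algebra
  then have "P dvd M1^2 - 2*(R1^2)^2" by simp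
  then have "P dvd R1^2" using cong2_int[OF P m] by blast
  then have "P dvd R1" using P by (simp add: prime_dvd_power_iff)
  then obtain R2 where R2: "R1 = P*R2" by blast
  have "M1^2 = P^2*(S^4 - 2*P*R2^2*S^2 + 2*P^2*R2^4)" using eM1 R2 by Groebner_Basis.algebra
  then have "P dvd M1^2" by (simp add: power2_eq_square)
  then have "P dvd M1" using P by (simp add: prime_dvd_power_iff)
  then obtain M0 where M0: "M1 = P*M0" by blast
  have P0: "P \<noteq> 0" using P by auto
  have "P^2*M0^2 = P^2*(S^4 - 2*P*R2^2*S^2 + 2*P^2*R2^4)" using eM1 R2 M0 by Groebner_Basis.algebra
  then have eq: "M0^2 = S^4 - 2*P*R2^2*S^2 + 2*P^2*R2^4" using P0 by simp
  have R20: "R2 \<noteq> 0" using Rp R1 R2 by auto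
  have RR: "R = 2*P*R2" using R1 R2 by simp
  have cSR: "coprime S R2" using cRS RR by (simp add: coprime_commute)
  have PS: "\<not> P dvd S"
  proof
    assume "P dvd S"
    moreover have "P dvd R" using RR by simp
    ultimately show False using cRS not_cop_prime[OF P] by blast
  qed
  show False using descent[OF P m refl R20 So cSR PS eq] .
qed

lemma rat_sq_int:
  fixes q :: rat and N :: int
  assumes "q^2 = of_int N"
  shows "\<exists>M. q = of_int M"
proof -
  obtain u v where uv: "quotient_of q = (u, v)" by (cases "quotient_of q")
  have v0: "v > 0" using quotient_of_denom_pos[OF uv] .
  have cop: "coprime u v" using quotient_of_coprime[OF uv] .
  have qd: "q = of_int u / of_int v" using quotient_of_div[OF uv] .
  have "(of_int u / of_int v)^2 = (of_int N :: rat)" using assms qd by simp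
  then have "(of_int u)^2 = (of_int N :: rat) * (of_int v)^2" using v0
    by (simp add: power_divide field_simps)
  then have "of_int (u^2) = (of_int (N * v^2) :: rat)" by simp
  then have uN: "u^2 = N * v^2" by (simp only: of_int_eq_iff)
  have "v dvd u^2" using uN by (simp add: power2_eq_square)
  moreover have "coprime v (u^2)" using cop by (simp add: coprime_commute)
  ultimately have "\<bar>v\<bar> = 1" using coprime_common_divisor_int[of v "u^2" v] by simp
  then have "v = 1" using v0 by simp
  then show ?thesis using qd by auto
qed

lemma main_int:
  fixes p :: nat
  assumes p: "prime p" and mp: "p mod 8 = 3 \<or> p mod 8 = 5"
  shows "\<not> (\<exists>a b c :: rat. a > 0 \<and> b > 0 \<and> c > 0 \<and>
      a * b = 2 * of_nat (2 * p) \<and> c ^ 2 = a ^ 2 + 2 * b ^ 2 - 2 * a * b)"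
proof
  assume "\<exists>a b c :: rat. a > 0 \<and> b > 0 \<and> c > 0 \<and>
      a * b = 2 * of_nat (2 * p) \<and> c ^ 2 = a ^ 2 + 2 * b ^ 2 - 2 * a * b"
  then obtain a b c :: rat where pos: "a > 0" "b > 0" "c > 0" and ab: "a * b = 2 * of_nat (2 * p)"
    and cc: "c ^ 2 = a ^ 2 + 2 * b ^ 2 - 2 * a * b" by blast
  define P where "P = int p"
  have PP: "prime P" unfolding P_def using p by simp
  have m: "P mod 8 = 3 \<or> P mod 8 = 5" unfolding P_def using mp
    by (metis of_nat_mod of_nat_numeral)
  obtain R S where RS: "quotient_of b = (R, S)" by (cases "quotient_of b")
  have Sp: "S > 0" using quotient_of_denom_pos[OF RS] .
  have cop: "coprime R S" using quotient_of_coprime[OF RS] .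
  have bd: "b = of_int R / of_int S" using quotient_of_div[OF RS] .
  have S0: "(of_int S :: rat) \<noteq> 0" using Sp by simp
  have bS: "b * of_int S = of_int R" using bd S0 by simp
  have "(of_int R :: rat) > 0" using pos(2) Sp bS by (metis of_int_0_less_iff mult_pos_pos)
  then have Rp: "R > 0" by simp
  have ab4: "a * b = 4 * of_int P" using ab unfolding P_def by simp
  have aR: "a * of_int R = 4 * of_int P * of_int S"
  proof -
    have "a * of_int R = a * b * of_int S" using bS by (simp add: mult.assoc)
    then show ?thesis using ab4 by simp
  qed
  define Q where "Q = c * of_int R * of_int S"
  have "Q^2 = 16*(of_int P)^2*(of_int S)^4 - 8*(of_int P)*(of_int R)^2*(of_int S)^2 + 2*(of_int R)^4"
    unfolding Q_def using cc aR bS by Groebner_Basis.algebra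
  then have Q2: "Q^2 = of_int (16*P^2*S^4 - 8*P*R^2*S^2 + 2*R^4)" by simp
  then obtain M where M: "Q = of_int M" using rat_sq_int by blast
  have "(of_int (M^2) :: rat) = of_int (16*P^2*S^4 - 8*P*R^2*S^2 + 2*R^4)"
    using Q2 M by simp
  then have "M^2 = 16*P^2*S^4 - 8*P*R^2*S^2 + 2*R^4" by (simp only: of_int_eq_iff)
  then show False using int_free[OF PP m Rp Sp cop] by blast
qed


theorem corollary3p3:
  fixes p :: nat
  assumes "prime p" and "p mod 8 = 3 \<or> p mod 8 = 5"
  shows "\<not> pi4_congruent (2 * p)"
  unfolding pi4_congruent_def by (rule main_int[OF assms])

end
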